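(* Let $n\ge3$, let $K$ be a binary dihedral group of order $8d$ with $d\ge2$, and let $H=[K,K]$ (cyclic of order $2d$, with $K/H\cong C_2\times C_2$). Let $\lambda=(\lambda_1,\dots,\lambda_k)$ be a partition of $n$ and $\alpha,\beta\in K$. Then $P_\lambda^\alpha$ and $P_\lambda^\beta$ are conjugate in $G_n(K,H)$ if and only if $\alpha\beta^{-1}\in H$ or $\gcd(\lambda_1,\dots,\lambda_k)$ is odd.
   Context: $\mathbb{H}$: quaternions. $A_n(K,H)$: diagonal matrices $\mathrm{diag}(k_1,\dots,k_n)$, $k_i\in K$, $k_1\cdots k_n\in H$; $G_n(K,H)$: group generated by $A_n(K,H)$ and the permutation matrices $M(\sigma)$, acting on $\mathbb{H}^n$ by left multiplication. For a partition $\lambda=(\lambda_1,\dots,\lambda_k)$ of $n$ with partial sums $m_i=\lambda_1+\dots+\lambda_i$, $m_0=0$, let $I_i=\{m_{i-1}+1,\dots,m_i\}$; for $\alpha\in K$ let $D_\alpha=\mathrm{diag}(\alpha,1,\dots,1)$. Then $P_\lambda^\alpha=P_1\times\dots\times P_k$ with $P_i=\{D_\alpha M(\sigma)D_\alpha^{-1}:\sigma\in\mathrm{Sym}(I_i)\}$. *)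

theory Defs
  imports "HOL-Analysis.Analysis" "Jordan_Normal_Form.Matrix" "HOL-Combinatorics.Permutations"
begin

datatype quat = Quat (qRe: real) (qI: real) (qJ: real) (qK: real)

lemma quat_eq_iff: "x = y \<longleftrightarrow> qRe x = qRe y \<and> qI x = qI y \<and> qJ x = qJ y \<and> qK x = qK y"
  by (cases x; cases y) auto

instantiation quat :: ring_1
begin
definition "0 = Quat 0 0 0 0"
definition "1 = Quat 1 0 0 0"
definition "x + y = Quat (qRe x + qRe y) (qI x + qI y) (qJ x + qJ y) (qK x + qK y)"
definition "x - y = Quat (qRe x - qRe y) (qI x - qI y) (qJ x - qJ y) (qK x - qK y)"
definition "- x = Quat (- qRe x) (- qI x) (- qJ x) (- qK x)"
definition "x * y = Quat
   (qRe x * qRe y - qI x * qI y - qJ x * qJ y - qK x * qK y)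
   (qRe x * qI y + qI x * qRe y + qJ x * qK y - qK x * qJ y)
   (qRe x * qJ y - qI x * qK y + qJ x * qRe y + qK x * qI y)
   (qRe x * qK y + qI x * qJ y - qJ x * qI y + qK x * qRe y)"
instance
  by standard (auto simp: quat_eq_iff zero_quat_def one_quat_def plus_quat_def
      minus_quat_def uminus_quat_def times_quat_def algebra_simps)
end

definition qnorm2 :: "quat \<Rightarrow> real" where
  "qnorm2 x = (qRe x)^2 + (qI x)^2 + (qJ x)^2 + (qK x)^2"

lemma qnorm2_nz: "x \<noteq> 0 \<Longrightarrow> qnorm2 x \<noteq> 0"
proof -
  assume "x \<noteq> 0"
  then have "qRe x \<noteq> 0 \<or> qI x \<noteq> 0 \<or> qJ x \<noteq> 0 \<or> qK x \<noteq> 0"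
    by (auto simp: quat_eq_iff zero_quat_def)
  moreover have "(qRe x)^2 \<ge> 0" "(qI x)^2 \<ge> 0" "(qJ x)^2 \<ge> 0" "(qK x)^2 \<ge> 0" by simp_all
  ultimately have "qnorm2 x > 0" unfolding qnorm2_def
    by (smt (verit) power2_less_0 zero_less_power2)
  then show ?thesis by simp
qed

instantiation quat :: division_ring
begin
definition "inverse x = Quat (qRe x / qnorm2 x) (- qI x / qnorm2 x) (- qJ x / qnorm2 x) (- qK x / qnorm2 x)"
definition "divide x y = x * inverse (y::quat)"
instance
proof
  fix a :: quat assume "a \<noteq> 0"
  then have n: "qnorm2 a \<noteq> 0" by (rule qnorm2_nz)
  show "inverse a * a = 1" "a * inverse a = 1"
    using n by (auto simp: quat_eq_iff inverse_quat_def times_quat_def one_quat_def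
        times_divide_eq_right minus_divide_left[symmetric] add_divide_distrib[symmetric]
        diff_divide_distrib[symmetric] divide_eq_1_iff, auto simp: qnorm2_def power2_eq_square algebra_simps)
next
  show "inverse (0::quat) = 0" by (simp add: inverse_quat_def zero_quat_def quat_eq_iff)
qed (simp add: divide_quat_def)
end

definition quat_subgroup :: "quat set \<Rightarrow> bool" where
  "quat_subgroup K \<longleftrightarrow> 1 \<in> K \<and> 0 \<notin> K \<and> (\<forall>x\<in>K. \<forall>y\<in>K. x * y \<in> K) \<and> (\<forall>x\<in>K. inverse x \<in> K)"

definition binary_dihedral :: "nat \<Rightarrow> quat set \<Rightarrow> bool" where
  "binary_dihedral d K \<longleftrightarrow> quat_subgroup K \<and> finite K \<and> card K = 8 * d \<and>
     (\<exists>a\<in>K. \<exists>b\<in>K. K = {a ^ m * b ^ e | m e. m < 4 * d \<and> e < 2} \<and>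
        a ^ (4 * d) = 1 \<and> (\<forall>m. 0 < m \<and> m < 4 * d \<longrightarrow> a ^ m \<noteq> 1) \<and>
        b ^ 2 = a ^ (2 * d) \<and> b * a * inverse b = inverse a)"

definition commutator_subgroup :: "quat set \<Rightarrow> quat set" where
  "commutator_subgroup K = \<Inter>{S. quat_subgroup S \<and>
      {x * y * inverse x * inverse y | x y. x \<in> K \<and> y \<in> K} \<subseteq> S}"

definition mat_prod_list :: "nat \<Rightarrow> quat mat list \<Rightarrow> quat mat" where
  "mat_prod_list n ms = foldr (*) ms (1\<^sub>m n)"

definition A_set :: "nat \<Rightarrow> quat set \<Rightarrow> quat set \<Rightarrow> quat mat set" where
  "A_set n K H = {mat_diag n k | k. (\<forall>i<n. k i \<in> K) \<and> prod_list (map k [0..<n]) \<in> H}"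

definition perm_mat :: "nat \<Rightarrow> (nat \<Rightarrow> nat) \<Rightarrow> quat mat" where
  "perm_mat n \<sigma> = Matrix.mat n n (\<lambda>(i, j). if i = \<sigma> j then 1 else 0)"

inductive_set gen_group :: "nat \<Rightarrow> quat mat set \<Rightarrow> quat mat set" for n S where
  gen_one: "1\<^sub>m n \<in> gen_group n S"
| gen_mult: "s \<in> S \<Longrightarrow> h \<in> gen_group n S \<Longrightarrow> s * h \<in> gen_group n S"
| gen_inv: "s \<in> S \<Longrightarrow> s * t = 1\<^sub>m n \<Longrightarrow> t * s = 1\<^sub>m n \<Longrightarrow> h \<in> gen_group n S \<Longrightarrow> t * h \<in> gen_group n S"

definition G_group :: "nat \<Rightarrow> quat set \<Rightarrow> quat set \<Rightarrow> quat mat set" where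
  "G_group n K H = gen_group n (A_set n K H \<union> {perm_mat n \<sigma> | \<sigma>. \<sigma> permutes {0..<n}})"

definition is_partition :: "nat list \<Rightarrow> nat \<Rightarrow> bool" where
  "is_partition lam n \<longleftrightarrow> (\<forall>x\<in>set lam. 0 < x) \<and> sorted_wrt (\<ge>) lam \<and> sum_list lam = n"

text \<open>Block I_(i+1) (0-based index i, 0-based matrix indices): {m_i, ..., m_(i+1) - 1}.\<close>
definition block :: "nat list \<Rightarrow> nat \<Rightarrow> nat set" where
  "block lam i = {sum_list (take i lam) ..< sum_list (take (Suc i) lam)}"

definition D_mat :: "nat \<Rightarrow> quat \<Rightarrow> quat mat" where
  "D_mat n \<alpha> = mat_diag n (\<lambda>i. if i = 0 then \<alpha> else 1)"

definition P_factor :: "nat \<Rightarrow> quat \<Rightarrow> nat set \<Rightarrow> quat mat set" where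
  "P_factor n \<alpha> I = {D_mat n \<alpha> * perm_mat n \<sigma> * D_mat n (inverse \<alpha>) | \<sigma>. \<sigma> permutes I}"

text \<open>P_lambda^alpha = P_1 x ... x P_k (internal product of the commuting factors).\<close>
definition P_set :: "nat \<Rightarrow> nat list \<Rightarrow> quat \<Rightarrow> quat mat set" where
  "P_set n lam \<alpha> = {mat_prod_list n ps | ps. length ps = length lam \<and>
      (\<forall>i<length lam. ps ! i \<in> P_factor n \<alpha> (block lam i))}"

definition conj_in :: "nat \<Rightarrow> quat mat set \<Rightarrow> quat mat set \<Rightarrow> quat mat set \<Rightarrow> bool" where
  "conj_in n G P Q \<longleftrightarrow> (\<exists>g\<in>G. \<exists>g'. g * g' = 1\<^sub>m n \<and> g' * g = 1\<^sub>m n \<and> (\<lambda>p. g * p * g') ` P = Q)"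

end

theory Submission
  imports Defs
begin

definition monm :: "nat \<Rightarrow> (nat \<Rightarrow> nat) \<Rightarrow> (nat \<Rightarrow> quat) \<Rightarrow> quat mat" where
  "monm n \<pi> c = Matrix.mat n n (\<lambda>(i, j). if i = \<pi> j then c j else 0)"

lemma monm_carrier[simp]: "monm n \<pi> c \<in> carrier_mat n n"
  by (simp add: monm_def)
lemma monm_dims[simp]: "dim_row (monm n \<pi> c) = n" "dim_col (monm n \<pi> c) = n"
  by (simp_all add: monm_def)

lemma monm_mult:
  assumes "\<And>j. j < n \<Longrightarrow> \<tau> j < n"
  shows "monm n \<pi> c * monm n \<tau> e = monm n (\<pi> \<circ> \<tau>) (\<lambda>j. c (\<tau> j) * e j)"
proof (rule eq_matI)
  fix i j assume i: "i < dim_row (monm n (\<pi> \<circ> \<tau>) (\<lambda>j. c (\<tau> j) * e j))"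
    and j: "j < dim_col (monm n (\<pi> \<circ> \<tau>) (\<lambda>j. c (\<tau> j) * e j))"
  then have i: "i < n" and j: "j < n" by auto
  have "(monm n \<pi> c * monm n \<tau> e) $$ (i, j) =
      (\<Sum>l\<in>{0..<n}. (if i = \<pi> l then c l else 0) * (if l = \<tau> j then e j else 0))"
    using i j by (simp add: monm_def scalar_prod_def)
  also have "\<dots> = (\<Sum>l\<in>{0..<n}. if l = \<tau> j then (if i = \<pi> l then c l else 0) * e j else 0)"
    by (rule sum.cong) auto
  also have "\<dots> = (if i = \<pi> (\<tau> j) then c (\<tau> j) else 0) * e j"
    using assms[OF j] by (simp add: sum.delta')
  finally show "(monm n \<pi> c * monm n \<tau> e) $$ (i, j) = monm n (\<pi> \<circ> \<tau>) (\<lambda>j. c (\<tau> j) * e j) $$ (i, j)"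
    using i j by (simp add: monm_def)
qed auto

lemma monm_eqD:
  assumes "monm n \<pi> c = monm n \<pi>' c'" "j < n" "\<pi> j < n" "c j \<noteq> 0"
  shows "\<pi>' j = \<pi> j \<and> c' j = c j"
proof -
  have "monm n \<pi> c $$ (\<pi> j, j) = monm n \<pi>' c' $$ (\<pi> j, j)" using assms(1) by simp
  then show ?thesis using assms(2-4) by (simp add: monm_def split: if_splits)
qed

lemma mat_diag_monm: "mat_diag n k = monm n id k"
  by (auto simp: mat_diag_def monm_def)
lemma perm_mat_monm: "perm_mat n \<sigma> = monm n \<sigma> (\<lambda>_. 1)"
  by (auto simp: perm_mat_def monm_def)
lemma one_monm: "1\<^sub>m n = monm n id (\<lambda>_. 1)"
  by (auto simp: monm_def)

definition dd :: "quat \<Rightarrow> nat \<Rightarrow> quat" where "dd x i = (if i = 0 then x else 1)"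

lemma D_monm: "D_mat n x = monm n id (dd x)"
  by (simp add: D_mat_def mat_diag_monm dd_def[abs_def])

locale bdh =
  fixes d :: nat and K :: "quat set" and a b :: quat
  assumes sg: "quat_subgroup K" and fin: "finite K" and cardK: "card K = 8 * d"
    and aK: "a \<in> K" and bK: "b \<in> K"
    and Keq: "K = {a ^ m * b ^ e | m e. m < 4 * d \<and> e < 2}"
    and a4: "a ^ (4 * d) = 1" and b2: "b ^ 2 = a ^ (2 * d)"
    and bab: "b * a * inverse b = inverse a" and d1: "d \<ge> 1"
begin

lemma oneK: "1 \<in> K" and zK: "0 \<notin> K" and multK: "x \<in> K \<Longrightarrow> y \<in> K \<Longrightarrow> x * y \<in> K"
  and invK: "x \<in> K \<Longrightarrow> inverse x \<in> K"
  using sg by (auto simp: quat_subgroup_def)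

lemma nzK: "x \<in> K \<Longrightarrow> x \<noteq> 0" using zK by auto

lemma b_nz: "b \<noteq> 0" using nzK bK by auto

lemma ba: "b * a = a ^ (4 * d - 1) * b"
proof -
  have "4 * d = Suc (4 * d - 1)" using d1 by simp
  then have "a * a ^ (4 * d - 1) = a ^ (4 * d)" by (metis power_Suc)
  then have "a * a ^ (4 * d - 1) = 1" using a4 by simp
  then have ia: "inverse a = a ^ (4 * d - 1)" by (rule inverse_unique)
  have "b * a = b * a * inverse b * b" using b_nz by (simp add: mult.assoc)
  then show ?thesis using bab ia by simp
qed

lemma bam: "b * a ^ m = a ^ ((4 * d - 1) * m) * b"
proof (induction m)
  case 0 then show ?case by simp
next
  case (Suc m)
  have "b * a ^ Suc m = (b * a) * a ^ m" by (simp add: mult.assoc)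
  also have "\<dots> = a ^ (4 * d - 1) * (b * a ^ m)" by (simp add: ba mult.assoc)
  also have "\<dots> = a ^ (4 * d - 1) * a ^ ((4 * d - 1) * m) * b" using Suc by (simp add: mult.assoc)
  also have "\<dots> = a ^ ((4 * d - 1) + (4 * d - 1) * m) * b" by (simp only: power_add)
  also have "(4 * d - 1) + (4 * d - 1) * m = (4 * d - 1) * Suc m" by simp
  finally show ?case .
qed

lemma amod: "a ^ k = a ^ (k mod (4 * d))"
proof -
  have "a ^ k = a ^ (4 * d * (k div (4 * d)) + k mod (4 * d))" by simp
  also have "\<dots> = (a ^ (4 * d)) ^ (k div (4 * d)) * a ^ (k mod (4 * d))" by (simp only: power_add power_mult)
  also have "\<dots> = a ^ (k mod (4 * d))" using a4 by simp
  finally show ?thesis .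
qed

definition f :: "nat \<times> nat \<Rightarrow> quat" where "f p = a ^ fst p * b ^ snd p"
definition Dm :: "(nat \<times> nat) set" where "Dm = {..<4 * d} \<times> {..<2}"

lemma K_img: "K = f ` Dm"
  unfolding Keq f_def Dm_def
  apply (auto simp: image_iff)
   apply (metis fst_conv snd_conv lessThan_iff mem_Sigma_iff)
  by blast

lemma f_inj: "inj_on f Dm"
proof (rule eq_card_imp_inj_on)
  show "finite Dm" by (simp add: Dm_def)
  show "card (f ` Dm) = card Dm" using K_img cardK by (simp add: Dm_def)
qed

lemma prod_form:
  assumes "e < 2" "e' < 2"
  shows "\<exists>N. a ^ m * b ^ e * (a ^ m' * b ^ e') = a ^ N * b ^ ((e + e') mod 2) \<and> (even N \<longleftrightarrow> even (m + m'))"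
proof (cases "e = 0")
  case True
  then show ?thesis using assms
    by (intro exI[of _ "m + m'"]) (auto simp: power_add mult.assoc)
next
  case False
  then have e: "e = 1" using assms by auto
  have "a ^ m * b ^ e * (a ^ m' * b ^ e') = a ^ m * (b * a ^ m') * b ^ e'"
    using e by (simp add: mult.assoc)
  also have "\<dots> = a ^ m * (a ^ ((4 * d - 1) * m') * b) * b ^ e'" by (simp only: bam)
  also have "\<dots> = a ^ (m + (4 * d - 1) * m') * b * b ^ e'" by (simp add: power_add mult.assoc)
  finally have 1: "a ^ m * b ^ e * (a ^ m' * b ^ e') = a ^ (m + (4 * d - 1) * m') * b * b ^ e'" .
  have par: "even ((4 * d - 1) * m') \<longleftrightarrow> even m'" using d1 by auto
  show ?thesis
  proof (cases "e' = 0")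
    case True
    then show ?thesis using 1 e par by (intro exI[of _ "m + (4 * d - 1) * m'"]) auto
  next
    case False
    then have e': "e' = 1" using assms by auto
    have "a ^ (m + (4 * d - 1) * m') * b * b ^ e' = a ^ (m + (4 * d - 1) * m' + 2 * d)"
      using e' b2 by (simp add: mult.assoc power2_eq_square power_add)
    then show ?thesis using 1 e e' par by (intro exI[of _ "m + (4 * d - 1) * m' + 2 * d"]) auto
  qed
qed

definition chi1 :: "quat \<Rightarrow> real" where "chi1 x = (-1) ^ fst (the_inv_into Dm f x)"
definition chi2 :: "quat \<Rightarrow> real" where "chi2 x = (-1) ^ snd (the_inv_into Dm f x)"

lemma chi_f: "p \<in> Dm \<Longrightarrow> chi1 (f p) = (-1) ^ fst p \<and> chi2 (f p) = (-1) ^ snd p"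
  by (simp add: chi1_def chi2_def the_inv_into_f_f[OF f_inj])

lemma chi_mult: assumes "x \<in> K" "y \<in> K"
  shows "chi1 (x * y) = chi1 x * chi1 y \<and> chi2 (x * y) = chi2 x * chi2 y"
proof -
  obtain m e where me: "(m, e) \<in> Dm" "x = f (m, e)" using assms(1) K_img by auto
  obtain m' e' where me': "(m', e') \<in> Dm" "y = f (m', e')" using assms(2) K_img by auto
  have e: "e < 2" "e' < 2" using me me' by (auto simp: Dm_def)
  obtain N where N: "a ^ m * b ^ e * (a ^ m' * b ^ e') = a ^ N * b ^ ((e + e') mod 2)"
    "even N \<longleftrightarrow> even (m + m')" using prod_form[OF e] by blast
  have xy: "x * y = f (N mod (4 * d), (e + e') mod 2)"
    using N(1) me me' by (simp add: f_def amod[of N])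
  have D: "(N mod (4 * d), (e + e') mod 2) \<in> Dm" using d1 by (simp add: Dm_def)
  have p1: "even (N mod (4 * d)) \<longleftrightarrow> even N"
  proof -
    have "N mod (4 * d) mod 2 = N mod 2" by (rule mod_mod_cancel) simp
    then show ?thesis by (simp add: even_iff_mod_2_eq_zero)
  qed
  have "((-1::real) ^ (N mod (4 * d))) = (-1) ^ m * (-1) ^ m'"
    using p1 N(2) by (simp add: minus_one_power_iff power_add[symmetric])
  moreover have "((-1::real) ^ ((e + e') mod 2)) = (-1) ^ e * (-1) ^ e'"
    by (simp add: minus_one_power_iff power_add[symmetric])
  ultimately show ?thesis using chi_f[OF D] chi_f[OF me(1)] chi_f[OF me'(1)] xy me me' by simp
qed

lemma chi_sq: "chi1 x * chi1 x = 1" "chi2 x * chi2 x = 1"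
  by (simp_all add: chi1_def chi2_def power_add[symmetric] flip: mult_2)

lemma chi_one: "chi1 1 = 1 \<and> chi2 1 = 1"
proof -
  have "chi1 1 = chi1 1 * chi1 1 \<and> chi2 1 = chi2 1 * chi2 1" using chi_mult[OF oneK oneK] by simp
  then show ?thesis using chi_sq by simp
qed

lemma chi_inv: assumes "x \<in> K" shows "chi1 (inverse x) = chi1 x \<and> chi2 (inverse x) = chi2 x"
proof -
  have "chi1 (inverse x) * chi1 x = 1 \<and> chi2 (inverse x) * chi2 x = 1"
    using chi_mult[OF invK[OF assms] assms] nzK[OF assms] chi_one by simp
  moreover have "chi1 x * chi1 x = 1" "chi2 x * chi2 x = 1" by (rule chi_sq)+
  ultimately have "chi1 (inverse x) * chi1 x = chi1 x * chi1 x" "chi2 (inverse x) * chi2 x = chi2 x * chi2 x"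
    by simp_all
  moreover have "chi1 x \<noteq> 0" "chi2 x \<noteq> 0" using chi_sq(1)[of x] chi_sq(2)[of x] by auto
  ultimately show ?thesis by simp
qed

definition Hc :: "quat set" where "Hc = {x \<in> K. chi1 x = 1 \<and> chi2 x = 1}"

lemma Hc_sub: "quat_subgroup Hc"
  unfolding quat_subgroup_def Hc_def using chi_one oneK zK multK invK chi_mult chi_inv by auto

lemma comm_Hc: "{x * y * inverse x * inverse y | x y. x \<in> K \<and> y \<in> K} \<subseteq> Hc"
proof clarify
  fix x y assume xy: "x \<in> K" "y \<in> K"
  have K1: "x * y \<in> K" "x * y * inverse x \<in> K" using xy multK invK by auto
  have "chi1 (x * y * inverse x * inverse y) = chi1 x * chi1 y * chi1 x * chi1 y"
       "chi2 (x * y * inverse x * inverse y) = chi2 x * chi2 y * chi2 x * chi2 y"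
    using chi_mult[OF K1(2) invK[OF xy(2)]] chi_mult[OF K1(1) invK[OF xy(1)]] chi_mult[OF xy]
      chi_inv xy by auto
  moreover have "chi1 x * chi1 y * chi1 x * chi1 y = 1" "chi2 x * chi2 y * chi2 x * chi2 y = 1"
    using chi_sq by (simp_all add: algebra_simps)
  ultimately show "x * y * inverse x * inverse y \<in> Hc"
    unfolding Hc_def using K1 xy multK invK by auto
qed

lemma H_eq: "commutator_subgroup K = Hc"
proof
  show "commutator_subgroup K \<subseteq> Hc"
    unfolding commutator_subgroup_def using Hc_sub comm_Hc by blast
next
  show "Hc \<subseteq> commutator_subgroup K"
  proof
    fix x assume x: "x \<in> Hc"
    then obtain m e where me: "(m, e) \<in> Dm" "x = f (m, e)" using K_img Hc_def by auto
    have "(-1::real) ^ m = 1" "(-1::real) ^ e = 1" using chi_f[OF me(1)] x me(2) by (auto simp: Hc_def)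
    then have "even m" "even e" by (auto simp: minus_one_power_iff split: if_splits)
    moreover have "e < 2" using me(1) by (auto simp: Dm_def)
    ultimately have "even m" "e = 0" by auto
    then obtain k where x2: "x = (a ^ 2) ^ k" using me(2) by (auto simp: f_def power_mult elim!: evenE)
    show "x \<in> commutator_subgroup K"
      unfolding commutator_subgroup_def
    proof clarify
      fix S assume S: "quat_subgroup S" "{x * y * inverse x * inverse y |x y. x \<in> K \<and> y \<in> K} \<subseteq> S"
      have "b * a * inverse b * inverse a \<in> S" using S(2) aK bK by blast
      then have "inverse (a ^ 2) \<in> S" using bab nzK[OF aK]
        by (simp add: power2_eq_square nonzero_inverse_mult_distrib)
      then have a2: "a ^ 2 \<in> S" using S(1) unfolding quat_subgroup_def
        by (metis inverse_inverse_eq)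
      have "(a ^ 2) ^ k \<in> S" for k
        by (induction k) (use S(1) a2 in \<open>auto simp: quat_subgroup_def\<close>)
      then show "x \<in> S" using x2 by simp
    qed
  qed
qed

end
definition S :: "nat list \<Rightarrow> nat \<Rightarrow> nat" where "S lam i = sum_list (take i lam)"

lemma block_S: "block lam i = {S lam i ..< S lam (Suc i)}" by (simp add: block_def S_def)

lemma S_mono: assumes "i \<le> j" shows "S lam i \<le> S lam j"
proof -
  have "take j lam = take i lam @ take (j - i) (drop i lam)"
    using take_add[of i "j - i" lam] assms by simp
  then show ?thesis by (simp add: S_def)
qed

lemma S_len: "length lam \<le> i \<Longrightarrow> S lam i = sum_list lam" by (simp add: S_def)

lemma S_Suc: "i < length lam \<Longrightarrow> S lam (Suc i) = S lam i + lam ! i"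
  by (simp add: S_def take_Suc_conv_app_nth)

lemma block_sub: "i < length lam \<Longrightarrow> block lam i \<subseteq> {0..<sum_list lam}"
  using S_mono[of "Suc i" "length lam" lam] S_len[of lam "length lam"]
  by (auto simp: block_S)

lemma block_disj_lt: assumes "i < j" shows "block lam i \<inter> block lam j = {}"
proof -
  have "S lam (Suc i) \<le> S lam j" using assms S_mono by simp
  then show ?thesis by (auto simp: block_S)
qed

lemma block_disj: assumes "i \<noteq> j" shows "block lam i \<inter> block lam j = {}"
proof (cases "i < j")
  case True then show ?thesis by (rule block_disj_lt)
next
  case False then have "j < i" using assms by simp
  then show ?thesis using block_disj_lt[of j i lam] by blast
qed

lemma card_block: "i < length lam \<Longrightarrow> card (block lam i) = lam ! i"
  by (simp add: block_S S_Suc)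

lemma block_cover: assumes "x < sum_list lam" shows "\<exists>i<length lam. x \<in> block lam i"
proof -
  have ex: "\<exists>i. x < S lam (Suc i)" using assms S_len[of lam "length lam"]
    by (intro exI[of _ "length lam"]) (simp add: S_len)
  define i where "i = (LEAST i. x < S lam (Suc i))"
  have i1: "x < S lam (Suc i)" unfolding i_def using LeastI_ex[OF ex] .
  have i2: "S lam i \<le> x"
  proof (cases i)
    case 0 then show ?thesis by (simp add: S_def)
  next
    case (Suc i')
    then have "\<not> x < S lam (Suc i')" using not_less_Least[of i' "\<lambda>i. x < S lam (Suc i)"] i_def by auto
    then show ?thesis using Suc by simp
  qed
  have "i < length lam"
  proof (rule ccontr)
    assume "\<not> i < length lam"
    then have "S lam i = sum_list lam" by (simp add: S_len)
    then show False using i2 assms by simp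
  qed
  then show ?thesis using i1 i2 by (auto simp: block_S)
qed

lemma sum_list_even: "\<forall>x\<in>set lam. even x \<Longrightarrow> even (sum_list (lam::nat list))"
  by (induction lam) auto

lemma S_even: "\<forall>x\<in>set lam. even x \<Longrightarrow> even (S lam i)"
  unfolding S_def
  by (rule sum_list_even) (meson in_set_takeD)

lemma pair_block: assumes "\<forall>x\<in>set lam. even x" "even x" "x < sum_list lam"
  shows "\<exists>i<length lam. x \<in> block lam i \<and> Suc x \<in> block lam i"
proof -
  obtain i where i: "i < length lam" "x \<in> block lam i" using block_cover assms(3) by blast
  have "even (S lam (Suc i))" using S_even assms(1) by blast
  then have "Suc x < S lam (Suc i)" using i assms(2) by (auto simp: block_S elim!: evenE oddE)
  then show ?thesis using i by (auto simp: block_S)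
qed

definition pres :: "nat list \<Rightarrow> (nat \<Rightarrow> nat) \<Rightarrow> bool" where
  "pres lam \<sigma> \<longleftrightarrow> (\<forall>i<length lam. \<forall>x. \<sigma> x \<in> block lam i \<longleftrightarrow> x \<in> block lam i)"

definition Y :: "nat list \<Rightarrow> (nat \<Rightarrow> nat) set" where
  "Y lam = {foldr (\<circ>) \<sigma>s id | \<sigma>s. length \<sigma>s = length lam \<and> (\<forall>i<length lam. \<sigma>s ! i permutes block lam i)}"

lemma pres_block_perm: assumes "i < length lam" "\<tau> permutes block lam i" shows "pres lam \<tau>"
  unfolding pres_def
proof (intro allI impI)
  fix j x assume j: "j < length lam"
  show "\<tau> x \<in> block lam j \<longleftrightarrow> x \<in> block lam j"
  proof (cases "j = i")
    case True then show ?thesis using permutes_in_image[OF assms(2), of x] by simp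
  next
    case False
    note dj = block_disj[OF False, of lam]
    show ?thesis
    proof (cases "x \<in> block lam i")
      case True
      then have "\<tau> x \<in> block lam i" using permutes_in_image[OF assms(2), of x] by simp
      then show ?thesis using True dj by blast
    next
      case False
      then have "\<tau> x = x" by (rule permutes_not_in[OF assms(2)])
      then show ?thesis by simp
    qed
  qed
qed

lemma foldr_perm:
  assumes "\<forall>\<tau>\<in>set \<sigma>s. \<exists>i<length lam. \<tau> permutes block lam i"
  shows "foldr (\<circ>) \<sigma>s id permutes {0..<sum_list lam} \<and> pres lam (foldr (\<circ>) \<sigma>s id)"
  using assms
proof (induction \<sigma>s)
  case Nil then show ?case by (simp add: pres_def permutes_id[unfolded id_def])
next
  case (Cons \<tau> \<sigma>s)
  then obtain i where i: "i < length lam" "\<tau> permutes block lam i" by auto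
  have p1: "\<tau> permutes {0..<sum_list lam}" using permutes_subset[OF i(2) block_sub[OF i(1)]] .
  have p2: "pres lam \<tau>" using pres_block_perm[OF i] .
  have IH: "foldr (\<circ>) \<sigma>s id permutes {0..<sum_list lam} \<and> pres lam (foldr (\<circ>) \<sigma>s id)"
  proof -
    have "\<forall>\<tau>\<in>set \<sigma>s. \<exists>i<length lam. \<tau> permutes block lam i" using Cons.prems by simp
    then show ?thesis using Cons.IH by blast
  qed
  have "\<tau> \<circ> foldr (\<circ>) \<sigma>s id permutes {0..<sum_list lam}"
    using permutes_compose[OF conjunct1[OF IH] p1] .
  moreover have "pres lam (\<tau> \<circ> foldr (\<circ>) \<sigma>s id)" using IH p2 by (simp add: pres_def)
  moreover have eq: "foldr (\<circ>) (\<tau> # \<sigma>s) id = \<tau> \<circ> foldr (\<circ>) \<sigma>s id" by simp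
  ultimately show ?case unfolding eq by blast
qed

lemma Y_perm: "\<sigma> \<in> Y lam \<Longrightarrow> \<sigma> permutes {0..<sum_list lam} \<and> pres lam \<sigma>"
  unfolding Y_def apply clarify apply (rule foldr_perm) by (metis in_set_conv_nth)

lemma foldr_single: "distinct xs \<Longrightarrow> foldr (\<circ>) (map (\<lambda>j. if j = i then t else id) xs) id = (if i \<in> set xs then t else id)"
  by (induction xs) auto

lemma transp_Y: assumes "i < length lam" "x \<in> block lam i" "y \<in> block lam i"
  shows "Transposition.transpose x y \<in> Y lam"
proof -
  let ?s = "map (\<lambda>j. if j = i then Transposition.transpose x y else id) [0..<length lam]"
  have "foldr (\<circ>) ?s id = Transposition.transpose x y" using assms(1) by (simp add: foldr_single)
  moreover have "\<forall>j<length lam. ?s ! j permutes block lam j"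
    using assms by (auto intro: permutes_swap_id)
  ultimately show ?thesis unfolding Y_def by (intro CollectI exI[of _ ?s]) auto
qed


lemma prod_upt: "prod_list (map f [0..<n]) = prod f {0..<(n::nat)}"
  by (metis distinct_upt prod.distinct_set_conv_list set_upt)

lemma monm_cong: "(\<And>j. j < n \<Longrightarrow> c j = c' j) \<Longrightarrow> monm n \<pi> c = monm n \<pi> c'"
  by (auto simp: monm_def intro!: eq_matI)

lemma dd_cancel:
  assumes "x \<noteq> 0"
  shows "dd x j * dd (inverse x) j = 1" "dd (inverse x) j * dd x j = 1"
    "dd x j * (dd (inverse x) j * y) = y" "dd (inverse x) j * (dd x j * y) = y"
  using assms by (auto simp: dd_def mult.assoc[symmetric])

lemma inv_cancel: "x \<noteq> (0::quat) \<Longrightarrow> x * (inverse x * y) = y" "x \<noteq> (0::quat) \<Longrightarrow> inverse x * (x * y) = y"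
  by (simp_all add: mult.assoc[symmetric])

lemma dd_nz: "x \<noteq> 0 \<Longrightarrow> dd x j \<noteq> 0" by (simp add: dd_def)

definition Mx :: "nat \<Rightarrow> quat \<Rightarrow> (nat \<Rightarrow> nat) \<Rightarrow> quat mat" where
  "Mx n x \<sigma> = monm n \<sigma> (\<lambda>j. dd x (\<sigma> j) * dd (inverse x) j)"

lemma perm_lt: assumes "\<sigma> permutes {0..<(n::nat)}" "j < n" shows "\<sigma> j < n"
  using permutes_in_image[OF assms(1), of j] assms(2) by auto

lemma D_perm_D: assumes "\<sigma> permutes {0..<n}"
  shows "D_mat n x * perm_mat n \<sigma> * D_mat n (inverse x) = Mx n x \<sigma>"
proof -
  have "D_mat n x * perm_mat n \<sigma> = monm n \<sigma> (\<lambda>j. dd x (\<sigma> j) * 1)"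
    unfolding D_monm perm_mat_monm using monm_mult[of n \<sigma> id "dd x" "\<lambda>_. 1"] perm_lt[OF assms] by simp
  also have "\<dots> * D_mat n (inverse x) = monm n \<sigma> (\<lambda>j. dd x (\<sigma> j) * 1 * dd (inverse x) j)"
    unfolding D_monm using monm_mult[of n id \<sigma>] by simp
  finally show ?thesis by (simp add: Mx_def)
qed

lemma Mx_mult: assumes "\<sigma> permutes {0..<n}" "\<tau> permutes {0..<n}" "x \<noteq> 0"
  shows "Mx n x \<sigma> * Mx n x \<tau> = Mx n x (\<sigma> \<circ> \<tau>)"
  unfolding Mx_def using perm_lt[OF assms(2)]
  by (subst monm_mult) (auto intro!: monm_cong simp: mult.assoc dd_cancel[OF assms(3)])

lemma Mx_id: "x \<noteq> 0 \<Longrightarrow> Mx n x id = 1\<^sub>m n"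
  unfolding Mx_def one_monm by (auto intro!: monm_cong simp: dd_cancel)

lemma prodlist_Mx: assumes "x \<noteq> 0" "\<forall>\<sigma>\<in>set \<sigma>s. \<sigma> permutes {0..<n}"
  shows "mat_prod_list n (map (Mx n x) \<sigma>s) = Mx n x (foldr (\<circ>) \<sigma>s id) \<and> foldr (\<circ>) \<sigma>s id permutes {0..<n}"
  using assms(2)
proof (induction \<sigma>s)
  case Nil
  have "Mx n x id = 1\<^sub>m n" by (rule Mx_id[OF assms(1)])
  moreover have "id permutes {0..<n}" by (rule permutes_id)
  ultimately show ?case unfolding mat_prod_list_def list.map foldr_Nil id_apply by metis
next
  case (Cons \<sigma> \<sigma>s)
  have pr: "\<forall>\<sigma>\<in>set \<sigma>s. \<sigma> permutes {0..<n}" and s: "\<sigma> permutes {0..<n}" using Cons.prems by simp_all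
  note IH0 = Cons.IH[OF pr]
  have IH: "mat_prod_list n (map (Mx n x) \<sigma>s) = Mx n x (foldr (\<circ>) \<sigma>s id)"
    "foldr (\<circ>) \<sigma>s id permutes {0..<n}" using IH0 by (rule conjunct1, rule conjunct2)
  have eq: "foldr (\<circ>) (\<sigma> # \<sigma>s) id = \<sigma> \<circ> foldr (\<circ>) \<sigma>s id" by simp
  have "mat_prod_list n (map (Mx n x) (\<sigma> # \<sigma>s)) = Mx n x \<sigma> * mat_prod_list n (map (Mx n x) \<sigma>s)"
    by (simp add: mat_prod_list_def)
  also have "\<dots> = Mx n x (\<sigma> \<circ> foldr (\<circ>) \<sigma>s id)" unfolding IH(1) by (rule Mx_mult[OF s IH(2) assms(1)])
  finally show ?case unfolding eq using permutes_compose[OF IH(2) s] by blast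
qed

lemma P_set_char: assumes "x \<noteq> 0" "sum_list lam = n"
  shows "P_set n lam x = Mx n x ` Y lam"
proof
  show "P_set n lam x \<subseteq> Mx n x ` Y lam"
  proof
    fix p assume "p \<in> P_set n lam x"
    then obtain ps where ps: "p = mat_prod_list n ps" "length ps = length lam"
      "\<forall>i<length lam. ps ! i \<in> P_factor n x (block lam i)" unfolding P_set_def by blast
    let ?Q = "\<lambda>i \<sigma>. \<sigma> permutes block lam i \<and> ps ! i = D_mat n x * perm_mat n \<sigma> * D_mat n (inverse x)"
    define \<sigma>s where "\<sigma>s = map (\<lambda>i. SOME \<sigma>. ?Q i \<sigma>) [0..<length lam]"
    have len: "length \<sigma>s = length lam" by (simp add: \<sigma>s_def)
    have Q: "?Q i (\<sigma>s ! i)" if "i < length lam" for i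
    proof -
      have ex: "\<exists>\<sigma>. ?Q i \<sigma>" using ps(3) that unfolding P_factor_def by blast
      have "\<sigma>s ! i = (SOME \<sigma>. ?Q i \<sigma>)" unfolding \<sigma>s_def using that by simp
      then show ?thesis using someI_ex[OF ex] by simp
    qed
    have pn: "\<sigma>s ! i permutes {0..<n}" if "i < length lam" for i
      using permutes_subset[OF conjunct1[OF Q[OF that]] block_sub[OF that]] assms(2) by simp
    have "ps = map (Mx n x) \<sigma>s"
    proof (rule nth_equalityI)
      show "length ps = length (map (Mx n x) \<sigma>s)" using ps(2) len by simp
      fix i assume "i < length ps"
      then have i: "i < length lam" using ps(2) by simp
      have "ps ! i = D_mat n x * perm_mat n (\<sigma>s ! i) * D_mat n (inverse x)" using Q[OF i] by blast
      also have "\<dots> = Mx n x (\<sigma>s ! i)" by (rule D_perm_D[OF pn[OF i]])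
      finally show "ps ! i = map (Mx n x) \<sigma>s ! i" using i len by simp
    qed
    moreover have all: "\<forall>\<sigma>\<in>set \<sigma>s. \<sigma> permutes {0..<n}" using pn len by (auto simp: in_set_conv_nth)
    ultimately have "p = Mx n x (foldr (\<circ>) \<sigma>s id)" using prodlist_Mx[OF assms(1) all] ps(1) by simp
    moreover have "foldr (\<circ>) \<sigma>s id \<in> Y lam" unfolding Y_def using Q len by blast
    ultimately show "p \<in> Mx n x ` Y lam" by blast
  qed
next
  show "Mx n x ` Y lam \<subseteq> P_set n lam x"
  proof
    fix p assume "p \<in> Mx n x ` Y lam"
    then obtain \<sigma>s where s: "p = Mx n x (foldr (\<circ>) \<sigma>s id)" "length \<sigma>s = length lam"
      "\<forall>i<length lam. \<sigma>s ! i permutes block lam i" unfolding Y_def by blast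
    have pn: "\<sigma>s ! i permutes {0..<n}" if "i < length lam" for i
      using permutes_subset[OF s(3)[rule_format, OF that] block_sub[OF that]] assms(2) by simp
    have all: "\<forall>\<sigma>\<in>set \<sigma>s. \<sigma> permutes {0..<n}" using pn s(2) by (auto simp: in_set_conv_nth)
    have pe: "p = mat_prod_list n (map (Mx n x) \<sigma>s)" using prodlist_Mx[OF assms(1) all] s(1) by simp
    have pf: "\<forall>i<length lam. map (Mx n x) \<sigma>s ! i \<in> P_factor n x (block lam i)"
    proof (intro allI impI)
      fix i assume i: "i < length lam"
      have "map (Mx n x) \<sigma>s ! i = D_mat n x * perm_mat n (\<sigma>s ! i) * D_mat n (inverse x)"
        using i s(2) D_perm_D[OF pn[OF i]] by simp
      then show "map (Mx n x) \<sigma>s ! i \<in> P_factor n x (block lam i)"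
        unfolding P_factor_def using s(3) i by blast
    qed
    show "p \<in> P_set n lam x" unfolding P_set_def
      apply (rule CollectI)
      apply (rule exI[of _ "map (Mx n x) \<sigma>s"])
      using pe pf s(2) by simp
  qed
qed

lemma prod_pairs: assumes "even n" "\<And>m. Suc (2 * m) < n \<Longrightarrow> f (2 * m) = f (Suc (2 * m))"
  "\<And>j. f j * f j = (1::real)"
  shows "prod f {0..<n} = 1"
proof -
  obtain m where n: "n = 2 * m" using assms(1) by blast
  have "\<forall>m'. m' \<le> m \<longrightarrow> prod f {0..<2 * m'} = 1"
  proof (intro allI impI)
    fix m' assume "m' \<le> m"
    then show "prod f {0..<2 * m'} = 1"
    proof (induction m')
      case 0 then show ?case by simp
    next
      case (Suc k)
      have "prod f {0..<2 * Suc k} = prod f {0..<2 * k} * f (2 * k) * f (Suc (2 * k))"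
        by (simp add: prod.atLeast0_lessThan_Suc mult.assoc)
      also have "\<dots> = 1" using Suc assms(2)[of k] assms(3)[of "2 * k"] n by (simp add: mult.assoc)
      finally show ?case .
    qed
  qed
  then show ?thesis using n by simp
qed

context bdh begin

lemma prodlist_chi: "\<forall>j\<in>set xs. k j \<in> K \<Longrightarrow> prod_list (map k xs) \<in> K \<and>
   chi1 (prod_list (map k xs)) = prod_list (map (\<lambda>j. chi1 (k j)) xs) \<and>
   chi2 (prod_list (map k xs)) = prod_list (map (\<lambda>j. chi2 (k j)) xs)"
  by (induction xs) (auto simp: oneK chi_one multK chi_mult)

lemma dd_K: "x \<in> K \<Longrightarrow> dd x j \<in> K" by (simp add: dd_def oneK)

lemma chi_dd: assumes "x \<in> K" "0 < n"
  shows "(\<Prod>j\<in>{0..<n}. chi1 (dd x j)) = chi1 x" "(\<Prod>j\<in>{0..<n}. chi2 (dd x j)) = chi2 x"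
proof -
  have "(\<Prod>j\<in>{0..<n}. chi1 (dd x j)) = (\<Prod>j\<in>{0..<n}. if j = 0 then chi1 x else 1)"
    by (rule prod.cong) (auto simp: dd_def chi_one)
  then show "(\<Prod>j\<in>{0..<n}. chi1 (dd x j)) = chi1 x" using assms by simp
  have "(\<Prod>j\<in>{0..<n}. chi2 (dd x j)) = (\<Prod>j\<in>{0..<n}. if j = 0 then chi2 x else 1)"
    by (rule prod.cong) (auto simp: dd_def chi_one)
  then show "(\<Prod>j\<in>{0..<n}. chi2 (dd x j)) = chi2 x" using assms by simp
qed

definition Gm :: "nat \<Rightarrow> quat mat set" where
  "Gm n = {monm n \<pi> c | \<pi> c. \<pi> permutes {0..<n} \<and> (\<forall>j<n. c j \<in> K) \<and>
     (\<Prod>j\<in>{0..<n}. chi1 (c j)) = 1 \<and> (\<Prod>j\<in>{0..<n}. chi2 (c j)) = 1}"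

lemma Gm_mult: assumes "A \<in> Gm n" "B \<in> Gm n" shows "A * B \<in> Gm n"
proof -
  obtain \<pi> c where A: "A = monm n \<pi> c" "\<pi> permutes {0..<n}" "\<forall>j<n. c j \<in> K"
    "(\<Prod>j\<in>{0..<n}. chi1 (c j)) = 1" "(\<Prod>j\<in>{0..<n}. chi2 (c j)) = 1" using assms(1) unfolding Gm_def by blast
  obtain \<tau> e where B: "B = monm n \<tau> e" "\<tau> permutes {0..<n}" "\<forall>j<n. e j \<in> K"
    "(\<Prod>j\<in>{0..<n}. chi1 (e j)) = 1" "(\<Prod>j\<in>{0..<n}. chi2 (e j)) = 1" using assms(2) unfolding Gm_def by blast
  have AB: "A * B = monm n (\<pi> \<circ> \<tau>) (\<lambda>j. c (\<tau> j) * e j)"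
    using A(1) B(1) monm_mult perm_lt[OF B(2)] by simp
  have K1: "\<forall>j<n. c (\<tau> j) * e j \<in> K" using A(3) B(3) perm_lt[OF B(2)] multK by auto
  have p1: "(\<Prod>j\<in>{0..<n}. chi1 (c (\<tau> j) * e j)) = 1"
  proof -
    have "(\<Prod>j\<in>{0..<n}. chi1 (c (\<tau> j) * e j)) = (\<Prod>j\<in>{0..<n}. chi1 (c (\<tau> j)) * chi1 (e j))"
      by (rule prod.cong) (use A(3) B(3) perm_lt[OF B(2)] chi_mult in auto)
    also have "\<dots> = (\<Prod>j\<in>{0..<n}. chi1 (c (\<tau> j))) * (\<Prod>j\<in>{0..<n}. chi1 (e j))" by (rule prod.distrib)
    also have "(\<Prod>j\<in>{0..<n}. chi1 (c (\<tau> j))) = (\<Prod>j\<in>{0..<n}. chi1 (c j))"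
      using prod.permute[OF B(2), of "\<lambda>j. chi1 (c j)"] by (simp add: o_def)
    finally show ?thesis using A(4) B(4) by simp
  qed
  have p2: "(\<Prod>j\<in>{0..<n}. chi2 (c (\<tau> j) * e j)) = 1"
  proof -
    have "(\<Prod>j\<in>{0..<n}. chi2 (c (\<tau> j) * e j)) = (\<Prod>j\<in>{0..<n}. chi2 (c (\<tau> j)) * chi2 (e j))"
      by (rule prod.cong) (use A(3) B(3) perm_lt[OF B(2)] chi_mult in auto)
    also have "\<dots> = (\<Prod>j\<in>{0..<n}. chi2 (c (\<tau> j))) * (\<Prod>j\<in>{0..<n}. chi2 (e j))" by (rule prod.distrib)
    also have "(\<Prod>j\<in>{0..<n}. chi2 (c (\<tau> j))) = (\<Prod>j\<in>{0..<n}. chi2 (c j))"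
      using prod.permute[OF B(2), of "\<lambda>j. chi2 (c j)"] by (simp add: o_def)
    finally show ?thesis using A(5) B(5) by simp
  qed
  show ?thesis unfolding Gm_def using AB K1 p1 p2 permutes_compose[OF B(2) A(2)] by blast
qed

lemma Gm_inv: assumes "A \<in> Gm n" "A * t = 1\<^sub>m n" "t * A = 1\<^sub>m n" shows "t \<in> Gm n"
proof -
  obtain \<pi> c where A: "A = monm n \<pi> c" "\<pi> permutes {0..<n}" "\<forall>j<n. c j \<in> K"
    "(\<Prod>j\<in>{0..<n}. chi1 (c j)) = 1" "(\<Prod>j\<in>{0..<n}. chi2 (c j)) = 1" using assms(1) unfolding Gm_def by blast
  have ip: "inv_into UNIV \<pi> permutes {0..<n}" using permutes_inv[OF A(2)] .
  define B where "B = monm n (inv_into UNIV \<pi>) (\<lambda>j. inverse (c (inv_into UNIV \<pi> j)))"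
  have "B * A = monm n (inv_into UNIV \<pi> \<circ> \<pi>) (\<lambda>j. inverse (c (inv_into UNIV \<pi> (\<pi> j))) * c j)"
    unfolding B_def A(1) using monm_mult perm_lt[OF A(2)] by simp
  also have "\<dots> = 1\<^sub>m n" unfolding one_monm permutes_inv_o(2)[OF A(2)]
    using A(3) nzK by (auto intro!: monm_cong simp: permutes_inverses(2)[OF A(2)])
  finally have BA: "B * A = 1\<^sub>m n" .
  have tc: "t \<in> carrier_mat n n"
  proof -
    have "dim_row t = n" using arg_cong[OF assms(3), of dim_row] by simp
    moreover have "dim_col t = n" using arg_cong[OF assms(2), of dim_col] by simp
    ultimately show ?thesis by auto
  qed
  have "t = (B * A) * t" using BA tc by simp
  also have "\<dots> = B * (A * t)" using A(1) tc B_def by (simp add: assoc_mult_mat[of _ n n _ n _ n])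
  also have "\<dots> = B" using assms(2) B_def by simp
  finally have tB: "t = B" .
  have K1: "\<forall>j<n. inverse (c (inv_into UNIV \<pi> j)) \<in> K" using A(3) perm_lt[OF ip] invK by auto
  have p1: "(\<Prod>j\<in>{0..<n}. chi1 (inverse (c (inv_into UNIV \<pi> j)))) = 1"
  proof -
    have "(\<Prod>j\<in>{0..<n}. chi1 (inverse (c (inv_into UNIV \<pi> j)))) = (\<Prod>j\<in>{0..<n}. chi1 (c (inv_into UNIV \<pi> j)))"
      by (rule prod.cong) (use A(3) perm_lt[OF ip] chi_inv in auto)
    also have "\<dots> = (\<Prod>j\<in>{0..<n}. chi1 (c j))"
      using prod.permute[OF ip, of "\<lambda>j. chi1 (c j)"] by (simp add: o_def)
    finally show ?thesis using A(4) by simp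
  qed
  have p2: "(\<Prod>j\<in>{0..<n}. chi2 (inverse (c (inv_into UNIV \<pi> j)))) = 1"
  proof -
    have "(\<Prod>j\<in>{0..<n}. chi2 (inverse (c (inv_into UNIV \<pi> j)))) = (\<Prod>j\<in>{0..<n}. chi2 (c (inv_into UNIV \<pi> j)))"
      by (rule prod.cong) (use A(3) perm_lt[OF ip] chi_inv in auto)
    also have "\<dots> = (\<Prod>j\<in>{0..<n}. chi2 (c j))"
      using prod.permute[OF ip, of "\<lambda>j. chi2 (c j)"] by (simp add: o_def)
    finally show ?thesis using A(5) by simp
  qed
  show ?thesis unfolding tB B_def Gm_def using ip K1 p1 p2 by blast
qed

lemma A_Gm: assumes "s \<in> A_set n K Hc" shows "s \<in> Gm n"
proof -
  obtain k where k: "s = mat_diag n k" "\<forall>i<n. k i \<in> K" "prod_list (map k [0..<n]) \<in> Hc"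
    using assms unfolding A_set_def by blast
  have "\<forall>j\<in>set [0..<n]. k j \<in> K" using k(2) by auto
  from prodlist_chi[OF this] k(3) have "(\<Prod>j\<in>{0..<n}. chi1 (k j)) = 1 \<and> (\<Prod>j\<in>{0..<n}. chi2 (k j)) = 1"
    unfolding Hc_def prod_upt by simp
  then show ?thesis unfolding Gm_def k(1) mat_diag_monm
    apply (intro CollectI exI[of _ id] exI[of _ k])
    using k(2) by simp
qed

lemma perm_Gm: assumes "\<sigma> permutes {0..<n}" shows "perm_mat n \<sigma> \<in> Gm n"
  unfolding Gm_def perm_mat_monm
  apply (rule CollectI)
  apply (rule exI[of _ \<sigma>], rule exI[of _ "\<lambda>_. 1"])
  using assms oneK chi_one by auto

lemma one_Gm: "1\<^sub>m n \<in> Gm n"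
  unfolding one_monm by (rule perm_Gm[unfolded perm_mat_monm]) simp

lemma G_sub: "x \<in> G_group n K Hc \<Longrightarrow> x \<in> Gm n"
  unfolding G_group_def
proof (induction rule: gen_group.induct)
  case gen_one then show ?case by (rule one_Gm)
next
  case (gen_mult s h)
  then have "s \<in> Gm n" using A_Gm perm_Gm by blast
  then show ?case using gen_mult Gm_mult by blast
next
  case (gen_inv s t h)
  then have "s \<in> Gm n" using A_Gm perm_Gm by blast
  then have "t \<in> Gm n" using Gm_inv gen_inv by blast
  then show ?case using gen_inv Gm_mult by blast
qed

end

context bdh begin

lemma conj_suff:
  assumes \<alpha>: "\<alpha> \<in> K" and \<beta>: "\<beta> \<in> K" and \<epsilon>K: "\<And>j. \<epsilon> j \<in> K"
    and \<epsilon>c: "\<And>\<sigma> j. \<sigma> \<in> Y lam \<Longrightarrow> j < n \<Longrightarrow> \<epsilon> (\<sigma> j) = \<epsilon> j"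
    and n: "sum_list lam = n"
    and c1: "(\<Prod>j\<in>{0..<n}. chi1 (dd \<beta> j * \<epsilon> j * dd (inverse \<alpha>) j)) = 1"
    and c2: "(\<Prod>j\<in>{0..<n}. chi2 (dd \<beta> j * \<epsilon> j * dd (inverse \<alpha>) j)) = 1"
  shows "conj_in n (G_group n K Hc) (Mx n \<alpha> ` Y lam) (Mx n \<beta> ` Y lam)"
proof -
  have a0: "\<alpha> \<noteq> 0" and b0: "\<beta> \<noteq> 0" and e0: "\<And>j. \<epsilon> j \<noteq> 0" using nzK \<alpha> \<beta> \<epsilon>K by auto
  define k where "k j = dd \<beta> j * \<epsilon> j * dd (inverse \<alpha>) j" for j
  define k' where "k' j = dd \<alpha> j * inverse (\<epsilon> j) * dd (inverse \<beta>) j" for j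
  define g where "g = monm n id k"
  define g' where "g' = monm n id k'"
  have kK: "\<forall>j\<in>set [0..<n]. k j \<in> K" unfolding k_def using dd_K \<alpha> \<beta> invK \<epsilon>K multK by auto
  have c1': "(\<Prod>j\<in>{0..<n}. chi1 (k j)) = 1" and c2': "(\<Prod>j\<in>{0..<n}. chi2 (k j)) = 1"
    using c1 c2 by (simp_all add: k_def)
  have "prod_list (map k [0..<n]) \<in> Hc"
    using prodlist_chi[OF kK] c1' c2' unfolding Hc_def prod_upt by simp
  then have gA: "g \<in> A_set n K Hc" unfolding A_set_def g_def mat_diag_monm[symmetric] using kK by auto
  have gG: "g \<in> G_group n K Hc"
  proof -
    have "g * 1\<^sub>m n \<in> G_group n K Hc" unfolding G_group_def
      by (rule gen_group.gen_mult) (use gA gen_group.gen_one in auto)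
    then show ?thesis by (simp add: g_def)
  qed
  have gg': "g * g' = 1\<^sub>m n" unfolding g_def g'_def one_monm
    by (subst monm_mult) (auto intro!: monm_cong simp: k_def k'_def mult.assoc dd_cancel a0 b0 inv_cancel e0)
  have g'g: "g' * g = 1\<^sub>m n" unfolding g_def g'_def one_monm
    by (subst monm_mult) (auto intro!: monm_cong simp: k_def k'_def mult.assoc dd_cancel a0 b0 inv_cancel e0)
  have img: "(\<lambda>p. g * p * g') ` (Mx n \<alpha> ` Y lam) = Mx n \<beta> ` Y lam"
    unfolding image_image
  proof (rule image_cong[OF refl])
    fix \<sigma> assume s: "\<sigma> \<in> Y lam"
    then have sp: "\<sigma> permutes {0..<n}" using Y_perm n by auto
    have "g * Mx n \<alpha> \<sigma> = monm n \<sigma> (\<lambda>j. k (\<sigma> j) * (dd \<alpha> (\<sigma> j) * dd (inverse \<alpha>) j))"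
      unfolding g_def Mx_def using perm_lt[OF sp] by (subst monm_mult) auto
    also have "\<dots> * g' = monm n \<sigma> (\<lambda>j. k (\<sigma> j) * (dd \<alpha> (\<sigma> j) * dd (inverse \<alpha>) j) * k' j)"
      unfolding g'_def by (subst monm_mult) auto
    also have "\<dots> = Mx n \<beta> \<sigma>" unfolding Mx_def
      using \<epsilon>c[OF s]
      by (auto intro!: monm_cong simp: k_def k'_def mult.assoc dd_cancel a0 b0 inv_cancel e0)
    finally show "g * Mx n \<alpha> \<sigma> * g' = Mx n \<beta> \<sigma>" .
  qed
  show ?thesis unfolding conj_in_def using gG gg' g'g img by blast
qed

lemma conj_nec:
  assumes \<alpha>: "\<alpha> \<in> K" and \<beta>: "\<beta> \<in> K"
    and n: "sum_list lam = n" and n0: "0 < n" and ev: "\<forall>x\<in>set lam. even x"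
    and cj: "conj_in n (G_group n K Hc) (Mx n \<alpha> ` Y lam) (Mx n \<beta> ` Y lam)"
  shows "chi1 \<alpha> * chi1 \<beta> = 1 \<and> chi2 \<alpha> * chi2 \<beta> = 1"
proof -
  have a0: "\<alpha> \<noteq> 0" and b0: "\<beta> \<noteq> 0" using nzK \<alpha> \<beta> by auto
  obtain g g' where gG: "g \<in> G_group n K Hc" and gg': "g * g' = 1\<^sub>m n" and g'g: "g' * g = 1\<^sub>m n"
    and img: "(\<lambda>p. g * p * g') ` (Mx n \<alpha> ` Y lam) = Mx n \<beta> ` Y lam"
    using cj unfolding conj_in_def by blast
  obtain \<pi> c where g: "g = monm n \<pi> c" "\<pi> permutes {0..<n}" "\<forall>j<n. c j \<in> K"
    "(\<Prod>j\<in>{0..<n}. chi1 (c j)) = 1" "(\<Prod>j\<in>{0..<n}. chi2 (c j)) = 1"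
    using G_sub[OF gG] unfolding Gm_def by blast
  have g'c: "g' \<in> carrier_mat n n"
  proof -
    have "dim_row g' = n" using arg_cong[OF g'g, of dim_row] by simp
    moreover have "dim_col g' = n" using arg_cong[OF gg', of dim_col] by simp
    ultimately show ?thesis by auto
  qed
  define e where "e j = dd (inverse \<beta>) (\<pi> j) * c j * dd \<alpha> j" for j
  have econst: "e y = e x" if i: "i < length lam" and x: "x \<in> block lam i" and y: "y \<in> block lam i" for i x y
  proof -
    have xn: "x < n" and yn: "y < n" using block_sub[OF i] x y n by auto
    define \<sigma> where "\<sigma> = Transposition.transpose x y"
    have sY: "\<sigma> \<in> Y lam" unfolding \<sigma>_def using transp_Y[OF i x y] .
    have sp: "\<sigma> permutes {0..<n}" using Y_perm[OF sY] n by auto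
    have "g * Mx n \<alpha> \<sigma> * g' \<in> Mx n \<beta> ` Y lam" using img sY by blast
    then obtain \<rho> where rY: "\<rho> \<in> Y lam" and r: "g * Mx n \<alpha> \<sigma> * g' = Mx n \<beta> \<rho>" by blast
    have rp: "\<rho> permutes {0..<n}" using Y_perm[OF rY] n by auto
    have gc: "g \<in> carrier_mat n n" unfolding g(1) by (rule monm_carrier)
    have Mc: "Mx n \<alpha> \<sigma> \<in> carrier_mat n n" unfolding Mx_def by (rule monm_carrier)
    have gM: "g * Mx n \<alpha> \<sigma> \<in> carrier_mat n n" by (rule mult_carrier_mat[OF gc Mc])
    have e1: "g * Mx n \<alpha> \<sigma> * g' * g = g * Mx n \<alpha> \<sigma> * (g' * g)" by (rule assoc_mult_mat[OF gM g'c gc])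
    have e2: "g * Mx n \<alpha> \<sigma> * (g' * g) = g * Mx n \<alpha> \<sigma>" unfolding g'g by (rule right_mult_one_mat[OF gM])
    have e3: "g * Mx n \<alpha> \<sigma> * g' * g = Mx n \<beta> \<rho> * g" unfolding r ..
    have eq: "g * Mx n \<alpha> \<sigma> = Mx n \<beta> \<rho> * g" using e1 e2 e3 by (metis (no_types))
    have L: "g * Mx n \<alpha> \<sigma> = monm n (\<pi> \<circ> \<sigma>) (\<lambda>j. c (\<sigma> j) * (dd \<alpha> (\<sigma> j) * dd (inverse \<alpha>) j))"
      unfolding g(1) Mx_def using perm_lt[OF sp] by (subst monm_mult) auto
    have R: "Mx n \<beta> \<rho> * g = monm n (\<rho> \<circ> \<pi>) (\<lambda>j. dd \<beta> (\<rho> (\<pi> j)) * dd (inverse \<beta>) (\<pi> j) * c j)"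
      unfolding g(1) Mx_def using perm_lt[OF g(2)] by (subst monm_mult) auto
    have sx: "\<sigma> x = y" by (simp add: \<sigma>_def)
    have cy: "c y \<noteq> 0" using g(3) yn nzK by auto
    have "(\<rho> \<circ> \<pi>) x = (\<pi> \<circ> \<sigma>) x \<and>
       dd \<beta> (\<rho> (\<pi> x)) * dd (inverse \<beta>) (\<pi> x) * c x = c (\<sigma> x) * (dd \<alpha> (\<sigma> x) * dd (inverse \<alpha>) x)"
    proof -
      have piy: "(\<pi> \<circ> \<sigma>) x < n" using perm_lt[OF g(2) yn] sx by simp
      have ne: "c (\<sigma> x) * (dd \<alpha> (\<sigma> x) * dd (inverse \<alpha>) x) \<noteq> 0"
        using cy sx dd_nz[OF a0] dd_nz[of "inverse \<alpha>"] a0 by simp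
      show ?thesis by (rule monm_eqD[OF eq[unfolded L R] xn piy ne])
    qed
    note R0 = this
    have E: "c y * (dd \<alpha> y * dd (inverse \<alpha>) x) = dd \<beta> (\<pi> y) * dd (inverse \<beta>) (\<pi> x) * c x"
      using sx conjunct1[OF R0] conjunct2[OF R0] by simp
    have "c y * dd \<alpha> y = c y * (dd \<alpha> y * dd (inverse \<alpha>) x) * dd \<alpha> x"
      by (simp add: mult.assoc dd_cancel[OF a0])
    also have "\<dots> = dd \<beta> (\<pi> y) * dd (inverse \<beta>) (\<pi> x) * c x * dd \<alpha> x" using E by simp
    finally have "c y * dd \<alpha> y = dd \<beta> (\<pi> y) * dd (inverse \<beta>) (\<pi> x) * c x * dd \<alpha> x" .
    then have "dd (inverse \<beta>) (\<pi> y) * (c y * dd \<alpha> y) = dd (inverse \<beta>) (\<pi> x) * c x * dd \<alpha> x"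
      by (simp add: mult.assoc dd_cancel[OF b0])
    then show ?thesis by (simp add: e_def mult.assoc)
  qed
  have eK: "\<And>j. j < n \<Longrightarrow> dd (inverse \<beta>) (\<pi> j) \<in> K \<and> c j \<in> K \<and> dd \<alpha> j \<in> K"
    using dd_K \<alpha> \<beta> invK g(3) by auto
  have ev_n: "even n" using sum_list_even[OF ev] n by simp
  have pair: "e (2 * m) = e (Suc (2 * m))" if m: "Suc (2 * m) < n" for m
  proof -
    have "2 * m < sum_list lam" using m n by simp
    then obtain i where "i < length lam" "2 * m \<in> block lam i" "Suc (2 * m) \<in> block lam i"
      using pair_block[OF ev, of "2 * m"] by auto
    then show ?thesis using econst by metis
  qed
  have ch1: "(\<Prod>j\<in>{0..<n}. chi1 (e j)) = chi1 \<beta> * chi1 \<alpha>"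
  proof -
    have "(\<Prod>j\<in>{0..<n}. chi1 (e j)) = (\<Prod>j\<in>{0..<n}. chi1 (dd (inverse \<beta>) (\<pi> j)) * chi1 (c j) * chi1 (dd \<alpha> j))"
      by (rule prod.cong) (use eK chi_mult multK in \<open>auto simp: e_def\<close>)
    also have "\<dots> = (\<Prod>j\<in>{0..<n}. chi1 (dd (inverse \<beta>) (\<pi> j))) * (\<Prod>j\<in>{0..<n}. chi1 (c j)) * (\<Prod>j\<in>{0..<n}. chi1 (dd \<alpha> j))"
      by (simp add: prod.distrib)
    also have "(\<Prod>j\<in>{0..<n}. chi1 (dd (inverse \<beta>) (\<pi> j))) = (\<Prod>j\<in>{0..<n}. chi1 (dd (inverse \<beta>) j))"
      using prod.permute[OF g(2), of "\<lambda>j. chi1 (dd (inverse \<beta>) j)"] by (simp add: o_def)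
    finally show ?thesis using g(4) chi_dd[OF invK[OF \<beta>] n0] chi_dd[OF \<alpha> n0] chi_inv[OF \<beta>] by simp
  qed
  have ch2: "(\<Prod>j\<in>{0..<n}. chi2 (e j)) = chi2 \<beta> * chi2 \<alpha>"
  proof -
    have "(\<Prod>j\<in>{0..<n}. chi2 (e j)) = (\<Prod>j\<in>{0..<n}. chi2 (dd (inverse \<beta>) (\<pi> j)) * chi2 (c j) * chi2 (dd \<alpha> j))"
      by (rule prod.cong) (use eK chi_mult multK in \<open>auto simp: e_def\<close>)
    also have "\<dots> = (\<Prod>j\<in>{0..<n}. chi2 (dd (inverse \<beta>) (\<pi> j))) * (\<Prod>j\<in>{0..<n}. chi2 (c j)) * (\<Prod>j\<in>{0..<n}. chi2 (dd \<alpha> j))"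
      by (simp add: prod.distrib)
    also have "(\<Prod>j\<in>{0..<n}. chi2 (dd (inverse \<beta>) (\<pi> j))) = (\<Prod>j\<in>{0..<n}. chi2 (dd (inverse \<beta>) j))"
      using prod.permute[OF g(2), of "\<lambda>j. chi2 (dd (inverse \<beta>) j)"] by (simp add: o_def)
    finally show ?thesis using g(5) chi_dd[OF invK[OF \<beta>] n0] chi_dd[OF \<alpha> n0] chi_inv[OF \<beta>] by simp
  qed
  have "(\<Prod>j\<in>{0..<n}. chi1 (e j)) = 1"
    by (rule prod_pairs[OF ev_n]) (use pair chi_sq in auto)
  moreover have "(\<Prod>j\<in>{0..<n}. chi2 (e j)) = 1"
    by (rule prod_pairs[OF ev_n]) (use pair chi_sq in auto)
  ultimately show ?thesis using ch1 ch2 by (simp add: mult.commute)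
qed

end

theorem lemma4p9:
  fixes n d :: nat and K H :: "quat set" and lam :: "nat list" and \<alpha> \<beta> :: quat
  assumes "n \<ge> 3" and "d \<ge> 2"
    and "binary_dihedral d K"
    and "H = commutator_subgroup K"
    and "is_partition lam n"
    and "\<alpha> \<in> K" and "\<beta> \<in> K"
  shows "conj_in n (G_group n K H) (P_set n lam \<alpha>) (P_set n lam \<beta>) \<longleftrightarrow>
         (\<alpha> * inverse \<beta> \<in> H \<or> odd (Gcd (set lam)))"
proof -
  obtain a b where ab: "quat_subgroup K" "finite K" "card K = 8 * d" "a \<in> K" "b \<in> K"
    "K = {a ^ m * b ^ e | m e. m < 4 * d \<and> e < 2}" "a ^ (4 * d) = 1" "b ^ 2 = a ^ (2 * d)"
    "b * a * inverse b = inverse a"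
    using assms(3) unfolding binary_dihedral_def by blast
  interpret bdh d K a b using ab assms(2) by unfold_locales auto
  have HH: "H = Hc" using assms(4) H_eq by simp
  have n: "sum_list lam = n" and pos: "\<forall>x\<in>set lam. 0 < x" using assms(5) by (auto simp: is_partition_def)
  have n0: "0 < n" using assms(1) by simp
  have a0: "\<alpha> \<noteq> 0" and b0: "\<beta> \<noteq> 0" using nzK assms(6,7) by auto
  have PA: "P_set n lam \<alpha> = Mx n \<alpha> ` Y lam" and PB: "P_set n lam \<beta> = Mx n \<beta> ` Y lam"
    using P_set_char[OF a0 n] P_set_char[OF b0 n] by auto
  have ab1: "\<alpha> * inverse \<beta> \<in> Hc \<longleftrightarrow> chi1 \<alpha> * chi1 \<beta> = 1 \<and> chi2 \<alpha> * chi2 \<beta> = 1"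
    using chi_mult[OF assms(6) invK[OF assms(7)]] chi_inv[OF assms(7)] multK[OF assms(6) invK[OF assms(7)]]
    by (simp add: Hc_def)
  show ?thesis
  proof
    assume cj: "conj_in n (G_group n K H) (P_set n lam \<alpha>) (P_set n lam \<beta>)"
    show "\<alpha> * inverse \<beta> \<in> H \<or> odd (Gcd (set lam))"
    proof (cases "odd (Gcd (set lam))")
      case True then show ?thesis by simp
    next
      case False
      then have ev: "\<forall>x\<in>set lam. even x" using Gcd_dvd dvd_trans by blast
      have "chi1 \<alpha> * chi1 \<beta> = 1 \<and> chi2 \<alpha> * chi2 \<beta> = 1"
        using conj_nec[OF assms(6,7) n n0 ev] cj HH PA PB by simp
      then show ?thesis using ab1 HH by simp
    qed
  next
    assume h: "\<alpha> * inverse \<beta> \<in> H \<or> odd (Gcd (set lam))"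
    show "conj_in n (G_group n K H) (P_set n lam \<alpha>) (P_set n lam \<beta>)"
      unfolding PA PB HH
    proof (cases "\<alpha> * inverse \<beta> \<in> Hc")
      case True
      then have c: "chi1 \<alpha> * chi1 \<beta> = 1" "chi2 \<alpha> * chi2 \<beta> = 1" using ab1 by auto
      have c1: "(\<Prod>j\<in>{0..<n}. chi1 (dd \<beta> j * 1 * dd (inverse \<alpha>) j)) = 1"
      proof -
        have "(\<Prod>j\<in>{0..<n}. chi1 (dd \<beta> j * 1 * dd (inverse \<alpha>) j)) = (\<Prod>j\<in>{0..<n}. chi1 (dd \<beta> j) * chi1 (dd (inverse \<alpha>) j))"
          by (rule prod.cong) (use chi_mult dd_K assms(6,7) invK in auto)
        also have "\<dots> = chi1 \<beta> * chi1 \<alpha>"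
          using chi_dd[OF assms(7) n0] chi_dd[OF invK[OF assms(6)] n0] chi_inv[OF assms(6)] by (simp add: prod.distrib)
        finally show ?thesis using c by (simp add: mult.commute)
      qed
      have c2: "(\<Prod>j\<in>{0..<n}. chi2 (dd \<beta> j * 1 * dd (inverse \<alpha>) j)) = 1"
      proof -
        have "(\<Prod>j\<in>{0..<n}. chi2 (dd \<beta> j * 1 * dd (inverse \<alpha>) j)) = (\<Prod>j\<in>{0..<n}. chi2 (dd \<beta> j) * chi2 (dd (inverse \<alpha>) j))"
          by (rule prod.cong) (use chi_mult dd_K assms(6,7) invK in auto)
        also have "\<dots> = chi2 \<beta> * chi2 \<alpha>"
          using chi_dd[OF assms(7) n0] chi_dd[OF invK[OF assms(6)] n0] chi_inv[OF assms(6)] by (simp add: prod.distrib)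
        finally show ?thesis using c by (simp add: mult.commute)
      qed
      show "conj_in n (G_group n K Hc) (Mx n \<alpha> ` Y lam) (Mx n \<beta> ` Y lam)"
        by (rule conj_suff[where \<epsilon> = "\<lambda>_. 1", OF assms(6,7) oneK _ n c1 c2]) auto
    next
      case False
      then have "odd (Gcd (set lam))" using h HH by simp
      then obtain i where i: "i < length lam" "odd (lam ! i)"
        by (metis Gcd_greatest dvd_trans in_set_conv_nth)
      define \<gamma> where "\<gamma> = \<alpha> * inverse \<beta>"
      have gK: "\<gamma> \<in> K" unfolding \<gamma>_def using multK invK assms(6,7) by auto
      define \<epsilon> where "\<epsilon> j = (if j \<in> block lam i then \<gamma> else 1)" for j
      have eK: "\<epsilon> j \<in> K" for j using gK oneK by (simp add: \<epsilon>_def)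
      have ec: "\<epsilon> (\<sigma> j) = \<epsilon> j" if "\<sigma> \<in> Y lam" for \<sigma> j
        using Y_perm[OF that] i(1) by (simp add: \<epsilon>_def pres_def)
      have bs: "block lam i \<subseteq> {0..<n}" using block_sub[OF i(1)] n by simp
      have cb: "card (block lam i) = lam ! i" using card_block[OF i(1)] .
      have cg: "chi1 \<gamma> = chi1 \<alpha> * chi1 \<beta>" "chi2 \<gamma> = chi2 \<alpha> * chi2 \<beta>"
        using chi_mult[OF assms(6) invK[OF assms(7)]] chi_inv[OF assms(7)] by (simp_all add: \<gamma>_def)
      have oddpow: "x ^ m = x" if xx: "x * x = (1::real)" and om: "odd m" for x m
      proof -
        obtain q where q: "m = Suc (2 * q)" using om by (metis oddE Suc_eq_plus1)
        have "x ^ (2 * q) = 1" using xx by (simp add: power_mult power2_eq_square)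
        then show ?thesis using q by simp
      qed
      have pe1: "(\<Prod>j\<in>{0..<n}. chi1 (\<epsilon> j)) = chi1 \<gamma>"
      proof -
        have "(\<Prod>j\<in>{0..<n}. chi1 (\<epsilon> j)) = (\<Prod>j\<in>{0..<n}. if j \<in> block lam i then chi1 \<gamma> else 1)"
          by (rule prod.cong) (auto simp: \<epsilon>_def chi_one)
        also have "\<dots> = (\<Prod>j\<in>block lam i. chi1 \<gamma>)"
          using bs by (simp add: prod.If_cases Int_absorb1 Int_absorb2)
        also have "\<dots> = chi1 \<gamma>" using cb i(2) oddpow chi_sq by simp
        finally show ?thesis .
      qed
      have pe2: "(\<Prod>j\<in>{0..<n}. chi2 (\<epsilon> j)) = chi2 \<gamma>"
      proof -
        have "(\<Prod>j\<in>{0..<n}. chi2 (\<epsilon> j)) = (\<Prod>j\<in>{0..<n}. if j \<in> block lam i then chi2 \<gamma> else 1)"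
          by (rule prod.cong) (auto simp: \<epsilon>_def chi_one)
        also have "\<dots> = (\<Prod>j\<in>block lam i. chi2 \<gamma>)"
          using bs by (simp add: prod.If_cases Int_absorb1 Int_absorb2)
        also have "\<dots> = chi2 \<gamma>" using cb i(2) oddpow chi_sq by simp
        finally show ?thesis .
      qed
      have c1: "(\<Prod>j\<in>{0..<n}. chi1 (dd \<beta> j * \<epsilon> j * dd (inverse \<alpha>) j)) = 1"
      proof -
        have "(\<Prod>j\<in>{0..<n}. chi1 (dd \<beta> j * \<epsilon> j * dd (inverse \<alpha>) j)) = (\<Prod>j\<in>{0..<n}. chi1 (dd \<beta> j) * chi1 (\<epsilon> j) * chi1 (dd (inverse \<alpha>) j))"
          by (rule prod.cong) (use chi_mult dd_K assms(6,7) invK eK multK in auto)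
        also have "\<dots> = chi1 \<beta> * chi1 \<gamma> * chi1 \<alpha>"
          using chi_dd[OF assms(7) n0] chi_dd[OF invK[OF assms(6)] n0] chi_inv[OF assms(6)] pe1 by (simp add: prod.distrib)
        also have "\<dots> = (chi1 \<alpha> * chi1 \<alpha>) * (chi1 \<beta> * chi1 \<beta>)" using cg by (simp add: algebra_simps)
        finally show ?thesis using chi_sq by simp
      qed
      have c2: "(\<Prod>j\<in>{0..<n}. chi2 (dd \<beta> j * \<epsilon> j * dd (inverse \<alpha>) j)) = 1"
      proof -
        have "(\<Prod>j\<in>{0..<n}. chi2 (dd \<beta> j * \<epsilon> j * dd (inverse \<alpha>) j)) = (\<Prod>j\<in>{0..<n}. chi2 (dd \<beta> j) * chi2 (\<epsilon> j) * chi2 (dd (inverse \<alpha>) j))"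
          by (rule prod.cong) (use chi_mult dd_K assms(6,7) invK eK multK in auto)
        also have "\<dots> = chi2 \<beta> * chi2 \<gamma> * chi2 \<alpha>"
          using chi_dd[OF assms(7) n0] chi_dd[OF invK[OF assms(6)] n0] chi_inv[OF assms(6)] pe2 by (simp add: prod.distrib)
        also have "\<dots> = (chi2 \<alpha> * chi2 \<alpha>) * (chi2 \<beta> * chi2 \<beta>)" using cg by (simp add: algebra_simps)
        finally show ?thesis using chi_sq by simp
      qed
      show "conj_in n (G_group n K Hc) (Mx n \<alpha> ` Y lam) (Mx n \<beta> ` Y lam)"
        by (rule conj_suff[where \<epsilon>=\<epsilon> and lam=lam and n=n and \<alpha>=\<alpha> and \<beta>=\<beta>])
          (use assms(6,7) eK ec n c1 c2 in auto)
    qed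
  qed
qed

end
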